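(* Let $n\ge 1$, $0<\nu\le 1$, $\rho>0$, and define on $\mathbb{R}^n$ $$f_0(\xi)=\exp(\rho|\xi|^\nu),\qquad f(\xi)=\exp\big(\rho(|\xi|^\nu\vee 1)\big).$$ Then for all $\xi,\eta\in\mathbb{R}^n$ the function $f$ satisfies: (i) $f(\xi)\le f(\xi-\eta)f(\eta)$ for all $\xi,\eta$; (ii) $f(\xi)\le f(\xi-\eta)f_0(\eta)^\nu$ whenever $|\xi|\wedge|\eta|\le|\xi-\eta|$; (iii) $|f(\xi)-f(\eta)|\,|\eta|^{1-\nu}\le |\xi-\eta|^{1-\nu}f(\xi-\eta)f(\eta)$ for all $\xi,\eta$; (iv) $|f(\xi)-f(\eta)|\,|\eta|^{1-\nu}\le C|\xi-\eta|^{1-\nu}f_0(\xi-\eta)^\nu f(\eta)$ whenever $|\xi|\wedge|\xi-\eta|\le|\eta|$; (v) $|f(\xi)-f(\eta)|\,|\eta|^{1-\nu}\le C|\xi-\eta|^{1-\nu}f(\xi-\eta)f_0(\eta)^\nu$ whenever $|\xi|\wedge|\eta|\le|\xi-\eta|$. In (iv) and (v) one can take $C=1$, except in the region $|\xi|\le|\xi-\eta|\le|\eta|$ where one can take $C=2^{1-\nu}$. Moreover, the function $f_0$ satisfies the same estimates (i)–(v) as $f$ (with $f$ replaced by $f_0$ throughout).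
   Context: $a\vee b=\max(a,b)$, $a\wedge b=\min(a,b)$. *)

theory Defs
  imports "HOL-Analysis.Analysis"
begin

text \<open>Real power of a nonnegative base with the convention t^0 = 1 (also for t = 0),
  unlike Isabelle's powr where 0 powr 0 = 0.\<close>
definition pw :: "real \<Rightarrow> real \<Rightarrow> real" where
  "pw t a = (if a = 0 then 1 else t powr a)"

definition f0 :: "real \<Rightarrow> real \<Rightarrow> 'a::euclidean_space \<Rightarrow> real" where
  "f0 \<rho> \<nu> \<xi> = exp (\<rho> * norm \<xi> powr \<nu>)"

definition f :: "real \<Rightarrow> real \<Rightarrow> 'a::euclidean_space \<Rightarrow> real" where
  "f \<rho> \<nu> \<xi> = exp (\<rho> * max (norm \<xi> powr \<nu>) 1)"

definition Cst :: "real \<Rightarrow> 'a::euclidean_space \<Rightarrow> 'a \<Rightarrow> real" where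
  "Cst \<nu> \<xi> \<eta> = (if norm \<xi> \<le> norm (\<xi> - \<eta>) \<and> norm (\<xi> - \<eta>) \<le> norm \<eta>
                   then 2 powr (1 - \<nu>) else 1)"

definition estimates ::
  "real \<Rightarrow> ('a::euclidean_space \<Rightarrow> real) \<Rightarrow> ('a \<Rightarrow> real) \<Rightarrow> bool" where
  "estimates \<nu> g F0 \<longleftrightarrow>
    (\<forall>\<xi> \<eta>.
      g \<xi> \<le> g (\<xi> - \<eta>) * g \<eta>
    \<and> (min (norm \<xi>) (norm \<eta>) \<le> norm (\<xi> - \<eta>) \<longrightarrow>
         g \<xi> \<le> g (\<xi> - \<eta>) * F0 \<eta> powr \<nu>)
    \<and> \<bar>g \<xi> - g \<eta>\<bar> * pw (norm \<eta>) (1 - \<nu>)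
         \<le> pw (norm (\<xi> - \<eta>)) (1 - \<nu>) * g (\<xi> - \<eta>) * g \<eta>
    \<and> (min (norm \<xi>) (norm (\<xi> - \<eta>)) \<le> norm \<eta> \<longrightarrow>
         \<bar>g \<xi> - g \<eta>\<bar> * pw (norm \<eta>) (1 - \<nu>)
           \<le> Cst \<nu> \<xi> \<eta> * pw (norm (\<xi> - \<eta>)) (1 - \<nu>) * F0 (\<xi> - \<eta>) powr \<nu> * g \<eta>)
    \<and> (min (norm \<xi>) (norm \<eta>) \<le> norm (\<xi> - \<eta>) \<longrightarrow>
         \<bar>g \<xi> - g \<eta>\<bar> * pw (norm \<eta>) (1 - \<nu>)
           \<le> Cst \<nu> \<xi> \<eta> * pw (norm (\<xi> - \<eta>)) (1 - \<nu>) * g (\<xi> - \<eta>) * F0 \<eta> powr \<nu>))"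

end

theory Submission
  imports Defs
begin

lemma pw_pos: "0 < (x::real) \<Longrightarrow> pw x e = x powr e"
  by (simp add: pw_def)

lemma pw_nonneg: "0 \<le> x \<Longrightarrow> 0 \<le> pw x e"
  by (simp add: pw_def)

lemma pw_mono: "0 \<le> x \<Longrightarrow> x \<le> y \<Longrightarrow> 0 \<le> e \<Longrightarrow> pw x e \<le> pw y e"
  by (simp add: pw_def powr_mono2)

lemma pq: fixes \<nu> x :: real assumes "0 < \<nu>" "0 \<le> x" shows "x powr \<nu> * pw x (1-\<nu>) = x"
proof (cases "x = 0")
  case True thus ?thesis by simp
next
  case False
  then have "x > 0" using assms by simp
  thus ?thesis by (simp add: pw_pos powr_add[symmetric])
qed

lemma young: fixes \<nu> x y :: real assumes "0 < \<nu>" "\<nu> \<le> 1" "0 < x" "0 < y"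
  shows "y powr \<nu> * x powr (1-\<nu>) \<le> \<nu>*y + (1-\<nu>)*x"
  using Youngs_inequality_0[of \<nu> "1-\<nu>" y x] assms by simp

lemma subadd: fixes \<nu> x y :: real assumes "0 < \<nu>" "\<nu> \<le> 1" "0 \<le> x" "0 \<le> y"
  shows "(x+y) powr \<nu> \<le> x powr \<nu> + y powr \<nu>"
proof (cases "x = 0 \<or> y = 0")
  case True thus ?thesis using assms by auto
next
  case False
  then have xp: "x > 0" "y > 0" using assms by auto
  have "x = x powr \<nu> * x powr (1-\<nu>)" using xp by (simp add: powr_add[symmetric])
  also have "\<dots> \<le> x powr \<nu> * (x+y) powr (1-\<nu>)"
    using xp assms by (intro mult_left_mono powr_mono2) auto
  finally have 1: "x \<le> x powr \<nu> * (x+y) powr (1-\<nu>)" .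
  have "y = y powr \<nu> * y powr (1-\<nu>)" using xp by (simp add: powr_add[symmetric])
  also have "\<dots> \<le> y powr \<nu> * (x+y) powr (1-\<nu>)"
    using xp assms by (intro mult_left_mono powr_mono2) auto
  finally have 2: "y \<le> y powr \<nu> * (x+y) powr (1-\<nu>)" .
  have "(x+y) powr \<nu> * (x+y) powr (1-\<nu>) = x + y" using xp by (simp add: powr_add[symmetric])
  also have "\<dots> \<le> (x powr \<nu> + y powr \<nu>) * (x+y) powr (1-\<nu>)"
    using 1 2 by (simp add: distrib_right)
  finally show ?thesis using xp by (simp add: mult_le_cancel_right)
qed

lemma F3: fixes \<nu> b c :: real assumes "0 < \<nu>" "\<nu> \<le> 1" "0 \<le> b" "b \<le> c"
  shows "(b+c) powr \<nu> \<le> c powr \<nu> + \<nu> * b powr \<nu>"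
proof (cases "b = 0")
  case True thus ?thesis by simp
next
  case False
  then have bp: "b > 0" "c > 0" using assms by auto
  have y: "(b+c) powr \<nu> * c powr (1-\<nu>) \<le> \<nu>*(b+c) + (1-\<nu>)*c"
    using young[of \<nu> c "b+c"] assms bp by simp
  have e1: "c = c powr \<nu> * c powr (1-\<nu>)" using bp by (simp add: powr_add[symmetric])
  have e2: "b = b powr \<nu> * b powr (1-\<nu>)" using bp by (simp add: powr_add[symmetric])
  have m: "b powr \<nu> * b powr (1-\<nu>) \<le> b powr \<nu> * c powr (1-\<nu>)"
    using bp assms by (intro mult_left_mono powr_mono2) auto
  have "\<nu>*(b+c) + (1-\<nu>)*c = c + \<nu> * b" by (simp add: algebra_simps)
  also have "\<dots> \<le> c powr \<nu> * c powr (1-\<nu>) + \<nu> * (b powr \<nu> * c powr (1-\<nu>))"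
    using m assms e1 e2 by (smt (verit) mult_left_mono)
  finally have "(b+c) powr \<nu> * c powr (1-\<nu>) \<le> (c powr \<nu> + \<nu> * b powr \<nu>) * c powr (1-\<nu>)"
    using y by (simp add: algebra_simps)
  thus ?thesis using bp by (simp add: mult_le_cancel_right)
qed

lemma F2: fixes \<nu> x y :: real assumes "0 < \<nu>" "\<nu> \<le> 1" "0 \<le> x" "x \<le> y"
  shows "(y powr \<nu> - x powr \<nu>) * pw y (1-\<nu>) \<le> y - x"
proof -
  have "x = x powr \<nu> * pw x (1-\<nu>)" using pq assms by simp
  also have "\<dots> \<le> x powr \<nu> * pw y (1-\<nu>)"
    using assms by (intro mult_left_mono pw_mono) auto
  finally show ?thesis using pq[of \<nu> y] assms by (simp add: algebra_simps)
qed

lemma youngdiff: fixes \<nu> x y :: real assumes "0 < \<nu>" "\<nu> \<le> 1" "0 < x" "x \<le> y"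
  shows "(y powr \<nu> - x powr \<nu>) * x powr (1-\<nu>) \<le> \<nu> * (y - x)"
proof -
  have "y powr \<nu> * x powr (1-\<nu>) \<le> \<nu>*y + (1-\<nu>)*x" using young assms by simp
  moreover have "x powr \<nu> * x powr (1-\<nu>) = x" using assms by (simp add: powr_add[symmetric])
  ultimately show ?thesis by (simp add: algebra_simps)
qed

lemma lemE: fixes d qb qc Y :: real assumes "0 \<le> d" "0 < qb" "0 \<le> qc" "qc \<le> qb" "d * qb \<le> Y * qc" "0 \<le> Y"
  shows "(exp d - 1) * qb \<le> qc * exp Y"
proof -
  define s where "s = qc / qb"
  have s01: "0 \<le> s" "s \<le> 1" using assms by (auto simp: s_def)
  have "d \<le> Y * s" using assms by (simp add: s_def pos_le_divide_eq mult.commute)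
  then have "exp d \<le> exp ((1 - s) *\<^sub>R 0 + s *\<^sub>R Y)" by (simp add: mult.commute)
  also have "\<dots> \<le> (1 - s) * exp 0 + s * exp Y"
    using convex_onD[OF exp_convex] s01 by blast
  finally have "exp d - 1 \<le> s * exp Y" using s01 by (simp add: algebra_simps)
  then have "(exp d - 1) * qb \<le> s * exp Y * qb" using assms by (simp add: mult_right_mono)
  also have "\<dots> = qc * exp Y" using assms by (simp add: s_def)
  finally show ?thesis .
qed

lemma exp2: fixes Y :: real assumes "0 \<le> Y" shows "2 * Y \<le> exp Y"
proof -
  have "1 + Y/2 \<le> exp (Y/2)" by simp
  then have "(1 + Y/2)^2 \<le> exp (Y/2) ^ 2" using assms by (intro power_mono) auto
  also have "exp (Y/2) ^ 2 = exp Y" by (simp add: exp_double[symmetric] power2_eq_square exp_add[symmetric])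
  finally have "(1 + Y/2)^2 \<le> exp Y" .
  moreover have "2 * Y \<le> (1 + Y/2)^2"
  proof -
    have "(1 + Y/2)^2 - 2 * Y = (1 - Y/2)^2" by (simp add: power2_eq_square algebra_simps)
    moreover have "0 \<le> (1 - Y/2)^2" by simp
    ultimately show ?thesis by linarith
  qed
  ultimately show ?thesis by simp
qed


context
  fixes \<nu> \<rho> :: real and h :: "real \<Rightarrow> real"
  assumes nu0: "0 < \<nu>" and nu1: "\<nu> \<le> 1" and rho: "0 < \<rho>"
    and hmono: "\<And>x y. 0 \<le> x \<Longrightarrow> x \<le> y \<Longrightarrow> h x \<le> h y"
    and hlow: "\<And>x. 0 \<le> x \<Longrightarrow> \<rho> * x powr \<nu> \<le> h x"
    and hlip: "\<And>x y. 0 \<le> x \<Longrightarrow> x \<le> y \<Longrightarrow> h y - h x \<le> \<rho> * (y powr \<nu> - x powr \<nu>)"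
    and hsub: "\<And>a b c. 0 \<le> a \<Longrightarrow> 0 \<le> b \<Longrightarrow> 0 \<le> c \<Longrightarrow> a \<le> b + c \<Longrightarrow> h a \<le> h b + h c"
    and hsub2: "\<And>a b c. 0 \<le> a \<Longrightarrow> 0 \<le> b \<Longrightarrow> 0 \<le> c \<Longrightarrow> a \<le> b + c \<Longrightarrow> b \<le> c
        \<Longrightarrow> h a \<le> h c + \<rho> * \<nu> * b powr \<nu>"
begin

lemma expnu: "exp (\<rho> * x powr \<nu>) powr \<nu> = exp (\<rho> * \<nu> * x powr \<nu>)"
  by (simp add: powr_def algebra_simps)

lemma Cge1: "1 \<le> (if P then 2 powr (1-\<nu>) else (1::real))"
  using nu1 by (auto intro: ge_one_powr_ge_zero)

lemma q2: assumes "0 \<le> b" "0 \<le> c" "b \<le> 2 * c"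
  shows "pw b (1-\<nu>) \<le> 2 powr (1-\<nu>) * pw c (1-\<nu>)"
proof (cases "\<nu> = 1")
  case True thus ?thesis by (simp add: pw_def)
next
  case False
  have "pw b (1-\<nu>) \<le> pw (2*c) (1-\<nu>)" using assms nu1 by (intro pw_mono) auto
  also have "\<dots> = 2 powr (1-\<nu>) * pw c (1-\<nu>)" using False assms
    by (simp add: pw_def powr_mult)
  finally show ?thesis .
qed

lemma L1: assumes "0 \<le> a" "0 \<le> b" "0 \<le> c" "a \<le> b + c"
  shows "exp (h a) \<le> exp (h c) * exp (h b)"
  using hsub[OF assms] by (simp add: exp_add[symmetric] add.commute)

lemma L2: assumes "0 \<le> a" "0 \<le> b" "0 \<le> c" "a \<le> b + c" "min a b \<le> c"
  shows "exp (h a) \<le> exp (h c) * exp (\<rho> * b powr \<nu>) powr \<nu>"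
proof -
  have "h a \<le> h c + \<rho> * \<nu> * b powr \<nu>"
  proof (cases "a \<le> c")
    case True
    have "0 \<le> \<rho> * \<nu> * b powr \<nu>" using rho nu0 by simp
    thus ?thesis using hmono[OF assms(1) True] by linarith
  next
    case False thus ?thesis using hsub2[OF assms(1-4)] assms(5) by simp
  qed
  thus ?thesis by (simp add: expnu exp_add[symmetric])
qed


lemma expdiff1: fixes x y :: real assumes "x \<le> y" shows "exp y - exp x \<le> exp y * (y - x)"
proof -
  have "1 + (x - y) \<le> exp (x - y)" by simp
  then have "exp y * (1 + (x - y)) \<le> exp y * exp (x - y)" by simp
  moreover have "exp y * exp (x - y) = exp x" by (simp add: exp_add[symmetric])
  ultimately show ?thesis by (simp add: algebra_simps)
qed

lemma absd: fixes x y :: real assumes "x \<le> y" shows "\<bar>exp y - exp x\<bar> = (exp (y - x) - 1) * exp x"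
proof -
  have "exp (y - x) * exp x = exp y" by (simp add: exp_add[symmetric])
  moreover have "\<bar>exp y - exp x\<bar> = exp y - exp x" using assms by simp
  ultimately show ?thesis by (simp add: algebra_simps)
qed

lemma L3: assumes a0: "0 \<le> a" and b0: "0 \<le> b" and c0: "0 \<le> c"
    and t1: "a \<le> b + c" and t2: "b \<le> a + c"
  shows "\<bar>exp (h a) - exp (h b)\<bar> * pw b (1-\<nu>) \<le> pw c (1-\<nu>) * exp (h c) * exp (h b)"
proof (cases "a \<le> b")
  case True
  have d0: "h a \<le> h b" using hmono a0 True by simp
  have ab: "\<bar>exp (h a) - exp (h b)\<bar> = exp (h b) - exp (h a)" using d0 by simp
  have e1: "exp (h b) - exp (h a) \<le> exp (h b) * (h b - h a)" using expdiff1 d0 by simp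
  have e2: "h b - h a \<le> \<rho> * (b powr \<nu> - a powr \<nu>)" using hlip a0 True by simp
  have e3: "(b powr \<nu> - a powr \<nu>) * pw b (1-\<nu>) \<le> b - a" using F2 nu0 nu1 a0 True by simp
  have qb0: "0 \<le> pw b (1-\<nu>)" using pw_nonneg b0 by simp
  have "\<bar>exp (h a) - exp (h b)\<bar> * pw b (1-\<nu>) \<le> exp (h b) * (h b - h a) * pw b (1-\<nu>)"
    using e1 ab qb0 mult_right_mono by metis
  also have "\<dots> \<le> exp (h b) * (\<rho> * (b powr \<nu> - a powr \<nu>)) * pw b (1-\<nu>)"
    using e2 qb0 by (intro mult_right_mono mult_left_mono) auto
  also have "\<dots> = exp (h b) * \<rho> * ((b powr \<nu> - a powr \<nu>) * pw b (1-\<nu>))" by (simp add: algebra_simps)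
  also have "\<dots> \<le> exp (h b) * \<rho> * c" using e3 t2 rho by (intro mult_left_mono) auto
  also have "\<dots> = exp (h b) * (\<rho> * c powr \<nu>) * pw c (1-\<nu>)" using pq[of \<nu> c] nu0 c0 by (simp add: algebra_simps)
  also have "\<dots> \<le> exp (h b) * exp (h c) * pw c (1-\<nu>)"
  proof -
    have "\<rho> * c powr \<nu> \<le> exp (\<rho> * c powr \<nu>)" using exp_ge_add_one_self[of "\<rho> * c powr \<nu>"] by linarith
    also have "\<dots> \<le> exp (h c)" using hlow c0 by simp
    finally show ?thesis using pw_nonneg c0 by (intro mult_right_mono mult_left_mono) auto
  qed
  finally show ?thesis by (simp add: ac_simps)
next
  case False
  have d0: "h b \<le> h a" using hmono b0 False by simp
  have ab: "\<bar>exp (h a) - exp (h b)\<bar> = (exp (h a - h b) - 1) * exp (h b)" using absd d0 by simp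
  have dd0: "0 \<le> exp (h a - h b) - 1" using d0 by simp
  show ?thesis
  proof (cases "b \<le> c")
    case True
    have "h a - h b \<le> h c" using hsub a0 b0 c0 t1 by fastforce
    then have "exp (h a - h b) - 1 \<le> exp (h c)" by (smt (verit) exp_mono)
    moreover have "pw b (1-\<nu>) \<le> pw c (1-\<nu>)" using True b0 nu1 by (intro pw_mono) auto
    ultimately have "(exp (h a - h b) - 1) * pw b (1-\<nu>) \<le> exp (h c) * pw c (1-\<nu>)"
      using dd0 pw_nonneg[OF b0] by (intro mult_mono) auto
    then have "(exp (h a - h b) - 1) * pw b (1-\<nu>) * exp (h b) \<le> exp (h c) * pw c (1-\<nu>) * exp (h b)"
      by simp
    thus ?thesis using ab by (simp add: ac_simps)
  next
    case False
    then have bp: "0 < b" using c0 by simp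
    have y: "(a powr \<nu> - b powr \<nu>) * b powr (1-\<nu>) \<le> \<nu> * (a - b)"
      using youngdiff[of \<nu> b a] nu0 nu1 bp \<open>\<not> a \<le> b\<close> by simp
    have "\<nu> * (a - b) \<le> a - b" using nu1 \<open>\<not> a \<le> b\<close> by (simp add: mult_left_le_one_le)
    also have "\<dots> \<le> c powr \<nu> * pw c (1-\<nu>)" using pq[of \<nu> c] nu0 c0 t1 by simp
    finally have y2: "(a powr \<nu> - b powr \<nu>) * pw b (1-\<nu>) \<le> c powr \<nu> * pw c (1-\<nu>)"
      using y bp by (simp add: pw_pos)
    have "(h a - h b) * pw b (1-\<nu>) \<le> \<rho> * (a powr \<nu> - b powr \<nu>) * pw b (1-\<nu>)"
      using hlip b0 \<open>\<not> a \<le> b\<close> pw_nonneg[OF b0] by (intro mult_right_mono) auto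
    also have "\<dots> \<le> \<rho> * (c powr \<nu> * pw c (1-\<nu>))" using y2 rho by (simp add: mult.assoc)
    finally have y3: "(h a - h b) * pw b (1-\<nu>) \<le> (\<rho> * c powr \<nu>) * pw c (1-\<nu>)" by (simp add: mult.assoc)
    have "(exp (h a - h b) - 1) * pw b (1-\<nu>) \<le> pw c (1-\<nu>) * exp (\<rho> * c powr \<nu>)"
      using lemE[OF _ _ _ _ y3] d0 bp pw_pos[OF bp] pw_nonneg[OF c0] pw_mono[of c b "1-\<nu>"] c0 False nu1 rho
      by simp
    also have "\<dots> \<le> pw c (1-\<nu>) * exp (h c)" using hlow c0 pw_nonneg[OF c0] by (intro mult_left_mono) auto
    finally have "(exp (h a - h b) - 1) * pw b (1-\<nu>) * exp (h b) \<le> pw c (1-\<nu>) * exp (h c) * exp (h b)"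
      by simp
    thus ?thesis using ab by (simp add: ac_simps)
  qed
qed


lemma L4: assumes a0: "0 \<le> a" and b0: "0 \<le> b" and c0: "0 \<le> c"
    and t1: "a \<le> b + c" and t2: "b \<le> a + c" and m: "min a c \<le> b"
  shows "\<bar>exp (h a) - exp (h b)\<bar> * pw b (1-\<nu>) \<le> (if a \<le> c \<and> c \<le> b then 2 powr (1-\<nu>) else 1)
           * pw c (1-\<nu>) * exp (\<rho> * c powr \<nu>) powr \<nu> * exp (h b)"
proof -
  define K where "K = (if a \<le> c \<and> c \<le> b then 2 powr (1-\<nu>) else (1::real))"
  define Y where "Y = \<rho> * \<nu> * c powr \<nu>"
  have K1: "1 \<le> K" unfolding K_def by (rule Cge1)
  have Y0: "0 \<le> Y" unfolding Y_def using rho nu0 by simp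
  have qc0: "0 \<le> pw c (1-\<nu>)" using pw_nonneg c0 by simp
  have qb0: "0 \<le> pw b (1-\<nu>)" using pw_nonneg b0 by simp
  have cq: "c = c powr \<nu> * pw c (1-\<nu>)" using pq[of \<nu> c] nu0 c0 by simp
  have "\<bar>exp (h a) - exp (h b)\<bar> * pw b (1-\<nu>) \<le> K * pw c (1-\<nu>) * exp Y * exp (h b)"
  proof (cases "a \<le> b")
    case True
    have d0: "h a \<le> h b" using hmono a0 True by simp
    have ab: "\<bar>exp (h a) - exp (h b)\<bar> = exp (h b) - exp (h a)" using d0 by simp
    have base: "\<bar>exp (h a) - exp (h b)\<bar> * pw b (1-\<nu>) \<le> pw b (1-\<nu>) * exp (h b)"
    proof -
      have "\<bar>exp (h a) - exp (h b)\<bar> \<le> exp (h b)" using ab by simp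
      thus ?thesis using qb0 by (metis mult.commute mult_right_mono)
    qed
    show ?thesis
    proof (cases "b \<le> c")
      case True
      have "pw b (1-\<nu>) \<le> pw c (1-\<nu>)" using True b0 nu1 by (intro pw_mono) auto
      also have "\<dots> = 1 * pw c (1-\<nu>)" by simp
      also have "\<dots> \<le> (K * exp Y) * pw c (1-\<nu>)"
      proof -
        have "1 \<le> exp Y" using Y0 by simp
        then have "1 * 1 \<le> K * exp Y" using K1 by (intro mult_mono) auto
        thus ?thesis using qc0 by (intro mult_right_mono) auto
      qed
      finally have X: "pw b (1-\<nu>) \<le> (K * exp Y) * pw c (1-\<nu>)" .
      have "pw b (1-\<nu>) * exp (h b) \<le> ((K * exp Y) * pw c (1-\<nu>)) * exp (h b)"
        using X by (intro mult_right_mono) auto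
      also have "\<dots> = K * pw c (1-\<nu>) * exp Y * exp (h b)" by (simp add: ac_simps)
      finally show ?thesis using base by linarith
    next
      case False
      show ?thesis
      proof (cases "a \<le> c")
        case True
        have K2: "K = 2 powr (1-\<nu>)" unfolding K_def using True False by simp
        have "pw b (1-\<nu>) \<le> K * pw c (1-\<nu>)" unfolding K2 using q2 b0 c0 t2 True by simp
        also have "\<dots> \<le> K * pw c (1-\<nu>) * exp Y" using K1 qc0 Y0
          mult_left_mono[of 1 "exp Y" "K * pw c (1-\<nu>)"] by simp
        finally have X: "pw b (1-\<nu>) \<le> K * pw c (1-\<nu>) * exp Y" .
        have "pw b (1-\<nu>) * exp (h b) \<le> K * pw c (1-\<nu>) * exp Y * exp (h b)"
          using X by (intro mult_right_mono) auto
        thus ?thesis using base by linarith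
      next
        case ca: False
        have ap: "0 < a" using ca c0 by simp
        have bp: "0 < b" using ap \<open>a \<le> b\<close> by simp
        have y: "(b powr \<nu> - a powr \<nu>) * a powr (1-\<nu>) \<le> \<nu> * (b - a)"
          using youngdiff[of \<nu> a b] nu0 nu1 ap \<open>a \<le> b\<close> by simp
        have pd: "0 \<le> b powr \<nu> - a powr \<nu>" using \<open>a \<le> b\<close> a0 nu0 by (simp add: powr_mono2)
        have "pw b (1-\<nu>) = b powr (1-\<nu>)" using bp by (simp add: pw_pos)
        also have "\<dots> \<le> (2*a) powr (1-\<nu>)" using t2 ca bp nu1 by (intro powr_mono2) auto
        also have "\<dots> = 2 powr (1-\<nu>) * a powr (1-\<nu>)" using ap by (simp add: powr_mult)
        also have "\<dots> \<le> 2 * a powr (1-\<nu>)"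
        proof -
          have "2 powr (1-\<nu>) \<le> 2 powr 1" using nu0 by (intro powr_mono) auto
          thus ?thesis by (intro mult_right_mono) auto
        qed
        finally have qb2: "pw b (1-\<nu>) \<le> 2 * a powr (1-\<nu>)" .
        have "(b powr \<nu> - a powr \<nu>) * pw b (1-\<nu>) \<le> (b powr \<nu> - a powr \<nu>) * (2 * a powr (1-\<nu>))"
          using qb2 pd by (intro mult_left_mono) auto
        also have "\<dots> \<le> 2 * (\<nu> * (b - a))" using y by simp
        also have "\<dots> \<le> 2 * (\<nu> * c)" using t2 nu0 by simp
        finally have y2: "(b powr \<nu> - a powr \<nu>) * pw b (1-\<nu>) \<le> 2 * \<nu> * c" by simp
        have K2: "K = 1" unfolding K_def using ca by simp
        have e1: "exp (h b) - exp (h a) \<le> exp (h b) * (h b - h a)" using expdiff1 d0 by simp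
        have e2: "h b - h a \<le> \<rho> * (b powr \<nu> - a powr \<nu>)" using hlip a0 \<open>a \<le> b\<close> by simp
        have "\<bar>exp (h a) - exp (h b)\<bar> * pw b (1-\<nu>) \<le> exp (h b) * (h b - h a) * pw b (1-\<nu>)"
          using e1 ab qb0 mult_right_mono by metis
        also have "\<dots> \<le> exp (h b) * (\<rho> * (b powr \<nu> - a powr \<nu>)) * pw b (1-\<nu>)"
          using e2 qb0 by (intro mult_right_mono mult_left_mono) auto
        also have "\<dots> = exp (h b) * \<rho> * ((b powr \<nu> - a powr \<nu>) * pw b (1-\<nu>))" by (simp add: algebra_simps)
        also have "\<dots> \<le> exp (h b) * \<rho> * (2 * \<nu> * c)" using y2 rho by (intro mult_left_mono) auto
        also have "\<dots> = exp (h b) * (2 * Y) * pw c (1-\<nu>)" unfolding Y_def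
          by (subst cq) (simp add: algebra_simps)
        also have "\<dots> \<le> exp (h b) * exp Y * pw c (1-\<nu>)"
          using exp2[OF Y0] qc0 by (intro mult_right_mono mult_left_mono) auto
        finally show ?thesis unfolding K2 by (simp add: ac_simps)
      qed
    qed
  next
    case False
    have cb: "c \<le> b" using m False by simp
    have bp: "0 < b" using False t1 cb c0 b0 by linarith
    have K2: "K = 1" unfolding K_def using False by auto
    have d0: "h b \<le> h a" using hmono b0 False by simp
    have ab: "\<bar>exp (h a) - exp (h b)\<bar> = (exp (h a - h b) - 1) * exp (h b)" using absd d0 by simp
    have y: "(a powr \<nu> - b powr \<nu>) * b powr (1-\<nu>) \<le> \<nu> * (a - b)"
      using youngdiff[of \<nu> b a] nu0 nu1 bp False by simp
    have "(h a - h b) * pw b (1-\<nu>) \<le> \<rho> * (a powr \<nu> - b powr \<nu>) * pw b (1-\<nu>)"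
      using hlip b0 False qb0 by (intro mult_right_mono) auto
    also have "\<dots> \<le> \<rho> * (\<nu> * (a - b))" using y rho bp by (simp add: pw_pos mult.assoc)
    also have "\<dots> \<le> \<rho> * (\<nu> * c)" using t1 rho nu0 by simp
    also have "\<dots> = Y * pw c (1-\<nu>)" unfolding Y_def by (subst cq) (simp add: algebra_simps)
    finally have y3: "(h a - h b) * pw b (1-\<nu>) \<le> Y * pw c (1-\<nu>)" .
    have "(exp (h a - h b) - 1) * pw b (1-\<nu>) \<le> pw c (1-\<nu>) * exp Y"
      using lemE[OF _ _ _ _ y3 Y0] d0 bp pw_pos[OF bp] qc0 pw_mono[of c b "1-\<nu>"] c0 cb nu1
      by simp
    then have "(exp (h a - h b) - 1) * pw b (1-\<nu>) * exp (h b) \<le> pw c (1-\<nu>) * exp Y * exp (h b)"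
      by simp
    thus ?thesis using ab K2 by (simp add: ac_simps)
  qed
  thus ?thesis unfolding K_def Y_def by (simp add: expnu)
qed

lemma L5: assumes a0: "0 \<le> a" and b0: "0 \<le> b" and c0: "0 \<le> c"
    and t1: "a \<le> b + c" and t2: "b \<le> a + c" and m: "min a b \<le> c"
  shows "\<bar>exp (h a) - exp (h b)\<bar> * pw b (1-\<nu>) \<le> (if a \<le> c \<and> c \<le> b then 2 powr (1-\<nu>) else 1)
           * pw c (1-\<nu>) * exp (h c) * exp (\<rho> * b powr \<nu>) powr \<nu>"
proof -
  define K where "K = (if a \<le> c \<and> c \<le> b then 2 powr (1-\<nu>) else (1::real))"
  define Z where "Z = \<rho> * \<nu> * b powr \<nu>"
  have K1: "1 \<le> K" unfolding K_def by (rule Cge1)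
  have Z0: "0 \<le> Z" unfolding Z_def using rho nu0 by simp
  have qc0: "0 \<le> pw c (1-\<nu>)" using pw_nonneg c0 by simp
  have qb0: "0 \<le> pw b (1-\<nu>)" using pw_nonneg b0 by simp
  have "\<bar>exp (h a) - exp (h b)\<bar> * pw b (1-\<nu>) \<le> K * pw c (1-\<nu>) * (exp (h c) * exp Z)"
  proof (cases "a \<le> b")
    case True
    have d0: "h a \<le> h b" using hmono a0 True by simp
    have ab: "\<bar>exp (h a) - exp (h b)\<bar> = exp (h b) - exp (h a)" using d0 by simp
    have base: "\<bar>exp (h a) - exp (h b)\<bar> * pw b (1-\<nu>) \<le> exp (h b) * pw b (1-\<nu>)"
      using ab qb0 by (simp add: mult_right_mono)
    have "pw b (1-\<nu>) \<le> K * pw c (1-\<nu>) \<and> exp (h b) \<le> exp (h c) * exp Z"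
    proof (cases "b \<le> c")
      case True
      have "pw b (1-\<nu>) \<le> pw c (1-\<nu>)" using True b0 nu1 by (intro pw_mono) auto
      also have "\<dots> \<le> K * pw c (1-\<nu>)" using K1 qc0 by (simp add: mult_le_cancel_right1)
      finally have 1: "pw b (1-\<nu>) \<le> K * pw c (1-\<nu>)" .
      have "h b \<le> h c + Z" using hmono[OF b0 True] Z0 by simp
      then have "exp (h b) \<le> exp (h c) * exp Z" by (simp add: exp_add[symmetric])
      with 1 show ?thesis by simp
    next
      case False
      have ac: "a \<le> c" using m False True by simp
      have K2: "K = 2 powr (1-\<nu>)" unfolding K_def using ac False by simp
      have 1: "pw b (1-\<nu>) \<le> K * pw c (1-\<nu>)" unfolding K2 using q2 b0 c0 t2 ac by simp
      have "h b \<le> h c + \<rho> * \<nu> * a powr \<nu>" using hsub2[OF b0 a0 c0 _ ac] t2 by (simp add: add.commute)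
      also have "\<dots> \<le> h c + Z" unfolding Z_def using rho nu0 True a0 by (simp add: powr_mono2)
      finally have "exp (h b) \<le> exp (h c) * exp Z" by (simp add: exp_add[symmetric])
      with 1 show ?thesis by simp
    qed
    then have "exp (h b) * pw b (1-\<nu>) \<le> (exp (h c) * exp Z) * (K * pw c (1-\<nu>))"
      using qb0 by (intro mult_mono) auto
    thus ?thesis using base by (simp add: ac_simps)
  next
    case False
    have bc: "b \<le> c" using m False by simp
    have d0: "h b \<le> h a" using hmono b0 False by simp
    have base: "\<bar>exp (h a) - exp (h b)\<bar> * pw b (1-\<nu>) \<le> exp (h a) * pw b (1-\<nu>)"
      using d0 qb0 by (simp add: mult_right_mono)
    have "pw b (1-\<nu>) \<le> pw c (1-\<nu>)" using bc b0 nu1 by (intro pw_mono) auto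
    also have "\<dots> \<le> K * pw c (1-\<nu>)" using K1 qc0 by (simp add: mult_le_cancel_right1)
    finally have 1: "pw b (1-\<nu>) \<le> K * pw c (1-\<nu>)" .
    have "h a \<le> h c + Z" using hsub2[OF a0 b0 c0 t1 bc] unfolding Z_def by simp
    then have "exp (h a) \<le> exp (h c) * exp Z" by (simp add: exp_add[symmetric])
    then have "exp (h a) * pw b (1-\<nu>) \<le> (exp (h c) * exp Z) * (K * pw c (1-\<nu>))"
      using qb0 1 by (intro mult_mono) auto
    thus ?thesis using base by (simp add: ac_simps)
  qed
  thus ?thesis unfolding K_def Z_def by (simp add: expnu ac_simps)
qed


lemma est: "estimates \<nu> (\<lambda>x::'a::euclidean_space. exp (h (norm x))) (f0 \<rho> \<nu>)"
  unfolding estimates_def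
proof (intro allI)
  fix \<xi> \<eta> :: 'a
  define a where "a = norm \<xi>"
  define b where "b = norm \<eta>"
  define c where "c = norm (\<xi> - \<eta>)"
  have a0: "0 \<le> a" and b0: "0 \<le> b" and c0: "0 \<le> c" by (auto simp: a_def b_def c_def)
  have t1: "a \<le> b + c" unfolding a_def b_def c_def by (rule norm_triangle_sub)
  have t2: "b \<le> a + c" unfolding a_def b_def c_def
    using norm_triangle_sub[of \<eta> \<xi>] by (simp add: norm_minus_commute)
  have C: "Cst \<nu> \<xi> \<eta> = (if a \<le> c \<and> c \<le> b then 2 powr (1-\<nu>) else 1)"
    by (simp add: Cst_def a_def b_def c_def)
  show "exp (h (norm \<xi>)) \<le> exp (h (norm (\<xi> - \<eta>))) * exp (h (norm \<eta>)) \<and>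
       (min (norm \<xi>) (norm \<eta>) \<le> norm (\<xi> - \<eta>) \<longrightarrow>
        exp (h (norm \<xi>)) \<le> exp (h (norm (\<xi> - \<eta>))) * f0 \<rho> \<nu> \<eta> powr \<nu>) \<and>
       \<bar>exp (h (norm \<xi>)) - exp (h (norm \<eta>))\<bar> * pw (norm \<eta>) (1 - \<nu>)
       \<le> pw (norm (\<xi> - \<eta>)) (1 - \<nu>) * exp (h (norm (\<xi> - \<eta>))) * exp (h (norm \<eta>)) \<and>
       (min (norm \<xi>) (norm (\<xi> - \<eta>)) \<le> norm \<eta> \<longrightarrow>
        \<bar>exp (h (norm \<xi>)) - exp (h (norm \<eta>))\<bar> * pw (norm \<eta>) (1 - \<nu>)
        \<le> Cst \<nu> \<xi> \<eta> * pw (norm (\<xi> - \<eta>)) (1 - \<nu>) * f0 \<rho> \<nu> (\<xi> - \<eta>) powr \<nu> *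
           exp (h (norm \<eta>))) \<and>
       (min (norm \<xi>) (norm \<eta>) \<le> norm (\<xi> - \<eta>) \<longrightarrow>
        \<bar>exp (h (norm \<xi>)) - exp (h (norm \<eta>))\<bar> * pw (norm \<eta>) (1 - \<nu>)
        \<le> Cst \<nu> \<xi> \<eta> * pw (norm (\<xi> - \<eta>)) (1 - \<nu>) * exp (h (norm (\<xi> - \<eta>))) *
           f0 \<rho> \<nu> \<eta> powr \<nu>)"
    unfolding C f0_def a_def[symmetric] b_def[symmetric] c_def[symmetric]
    using L1[OF a0 b0 c0 t1] L2[OF a0 b0 c0 t1] L3[OF a0 b0 c0 t1 t2]
      L4[OF a0 b0 c0 t1 t2] L5[OF a0 b0 c0 t1 t2]
    by blast
qed

end


theorem lemma3p1:
  fixes \<rho> \<nu> :: real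
  assumes "0 < \<nu>" and "\<nu> \<le> 1" and "0 < \<rho>"
  shows "estimates \<nu> (f \<rho> \<nu> :: 'a::euclidean_space \<Rightarrow> real) (f0 \<rho> \<nu>)
       \<and> estimates \<nu> (f0 \<rho> \<nu> :: 'a \<Rightarrow> real) (f0 \<rho> \<nu>)"
proof
  note nu0 = assms(1) and nu1 = assms(2) and rho = assms(3)
  have pm: "\<And>x y. 0 \<le> x \<Longrightarrow> x \<le> y \<Longrightarrow> x powr \<nu> \<le> y powr \<nu>"
    using nu0 by (simp add: powr_mono2)
  have psub: "\<And>a b c. 0 \<le> a \<Longrightarrow> 0 \<le> b \<Longrightarrow> 0 \<le> c \<Longrightarrow> a \<le> b + c \<Longrightarrow>
      a powr \<nu> \<le> b powr \<nu> + c powr \<nu>"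
    using pm subadd[OF nu0 nu1] by (meson add_nonneg_nonneg order_trans)
  have psub2: "\<And>a b c. 0 \<le> a \<Longrightarrow> 0 \<le> b \<Longrightarrow> 0 \<le> c \<Longrightarrow> a \<le> b + c \<Longrightarrow> b \<le> c \<Longrightarrow>
      a powr \<nu> \<le> c powr \<nu> + \<nu> * b powr \<nu>"
    using pm F3[OF nu0 nu1] by (meson add_nonneg_nonneg order_trans)
  have ef: "(f \<rho> \<nu> :: 'a \<Rightarrow> real) = (\<lambda>x. exp ((\<lambda>t. \<rho> * max (t powr \<nu>) 1) (norm x)))"
    by (simp add: fun_eq_iff f_def)
  have ef0: "(f0 \<rho> \<nu> :: 'a \<Rightarrow> real) = (\<lambda>x. exp ((\<lambda>t. \<rho> * t powr \<nu>) (norm x)))"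
    by (simp add: fun_eq_iff f0_def)
  show "estimates \<nu> (f \<rho> \<nu> :: 'a \<Rightarrow> real) (f0 \<rho> \<nu>)"
    unfolding ef
  proof (rule est[OF nu0 nu1 rho])
    fix x y :: real assume "0 \<le> x" "x \<le> y"
    then have "x powr \<nu> \<le> y powr \<nu>" using pm by simp
    then show "\<rho> * max (x powr \<nu>) 1 \<le> \<rho> * max (y powr \<nu>) 1"
      using rho by (intro mult_left_mono) auto
  next
    fix x :: real assume "0 \<le> x"
    show "\<rho> * x powr \<nu> \<le> \<rho> * max (x powr \<nu>) 1" using rho by (intro mult_left_mono) auto
  next
    fix x y :: real assume "0 \<le> x" "x \<le> y"
    then have "x powr \<nu> \<le> y powr \<nu>" using pm by simp
    then have "max (y powr \<nu>) 1 - max (x powr \<nu>) 1 \<le> y powr \<nu> - x powr \<nu>" by linarith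
    then show "\<rho> * max (y powr \<nu>) 1 - \<rho> * max (x powr \<nu>) 1 \<le> \<rho> * (y powr \<nu> - x powr \<nu>)"
      using rho by (simp add: right_diff_distrib[symmetric])
  next
    fix a b c :: real assume h: "0 \<le> a" "0 \<le> b" "0 \<le> c" "a \<le> b + c"
    then have "a powr \<nu> \<le> b powr \<nu> + c powr \<nu>" by (rule psub)
    then have "max (a powr \<nu>) 1 \<le> max (b powr \<nu>) 1 + max (c powr \<nu>) 1" by auto
    then show "\<rho> * max (a powr \<nu>) 1 \<le> \<rho> * max (b powr \<nu>) 1 + \<rho> * max (c powr \<nu>) 1"
      using rho by (simp add: distrib_left[symmetric])
  next
    fix a b c :: real assume h: "0 \<le> a" "0 \<le> b" "0 \<le> c" "a \<le> b + c" "b \<le> c"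
    then have "a powr \<nu> \<le> c powr \<nu> + \<nu> * b powr \<nu>" by (rule psub2)
    moreover have "0 \<le> \<nu> * b powr \<nu>" using nu0 by simp
    ultimately have "max (a powr \<nu>) 1 \<le> max (c powr \<nu>) 1 + \<nu> * b powr \<nu>" by auto
    then have "\<rho> * max (a powr \<nu>) 1 \<le> \<rho> * (max (c powr \<nu>) 1 + \<nu> * b powr \<nu>)"
      using rho by (intro mult_left_mono) auto
    then show "\<rho> * max (a powr \<nu>) 1 \<le> \<rho> * max (c powr \<nu>) 1 + \<rho> * \<nu> * b powr \<nu>"
      by (simp add: algebra_simps)
  qed
  have "estimates \<nu> (\<lambda>x::'a. exp ((\<lambda>t. \<rho> * t powr \<nu>) (norm x))) (f0 \<rho> \<nu>)"
  proof (rule est[OF nu0 nu1 rho])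
    fix x y :: real assume "0 \<le> x" "x \<le> y"
    then show "\<rho> * x powr \<nu> \<le> \<rho> * y powr \<nu>"
      using pm rho by (intro mult_left_mono) auto
  next
    fix x :: real assume "0 \<le> x"
    show "\<rho> * x powr \<nu> \<le> \<rho> * x powr \<nu>" by simp
  next
    fix x y :: real assume "0 \<le> x" "x \<le> y"
    show "\<rho> * y powr \<nu> - \<rho> * x powr \<nu> \<le> \<rho> * (y powr \<nu> - x powr \<nu>)"
      by (simp add: algebra_simps)
  next
    fix a b c :: real assume h: "0 \<le> a" "0 \<le> b" "0 \<le> c" "a \<le> b + c"
    then have "a powr \<nu> \<le> b powr \<nu> + c powr \<nu>" by (rule psub)
    then show "\<rho> * a powr \<nu> \<le> \<rho> * b powr \<nu> + \<rho> * c powr \<nu>"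
      using rho by (simp add: distrib_left[symmetric])
  next
    fix a b c :: real assume h: "0 \<le> a" "0 \<le> b" "0 \<le> c" "a \<le> b + c" "b \<le> c"
    then have "a powr \<nu> \<le> c powr \<nu> + \<nu> * b powr \<nu>" by (rule psub2)
    then have "\<rho> * a powr \<nu> \<le> \<rho> * (c powr \<nu> + \<nu> * b powr \<nu>)"
      using rho by (intro mult_left_mono) auto
    then show "\<rho> * a powr \<nu> \<le> \<rho> * c powr \<nu> + \<rho> * \<nu> * b powr \<nu>"
      by (simp add: algebra_simps)
  qed
  then show "estimates \<nu> (f0 \<rho> \<nu> :: 'a \<Rightarrow> real) (f0 \<rho> \<nu>)"
    unfolding ef0[symmetric] .
qed

end
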